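(* Let $a,b$ be positive integers with $1<b/a\le 2$, and let $c$ be the remainder upon division of $a$ by $b-a$ (so $0\le c<b-a$). Let $V=\langle 1,u^c,u^{b-a}\rangle\subset S_{b-a}$. Then $\mu_V(W)\ge b/a$ for every nonzero linear subspace $W\subset S_{a-1}$.
   Context: Over $\mathbb{C}$, $S_a$ denotes the space of polynomials in one variable $u$ of degree at most $a$. For subspaces $V,W$, $V\cdot W$ is the span of products $fg$ ($f\in V$, $g\in W$), and for nonzero $W\subset S_{a-1}$, $\mu_V(W)=\dim(V\cdot W)/\dim W$. *)

theory Defs
  imports Main "HOL-Computational_Algebra.Polynomial"
begin

interpretation pvs: vector_space "smult :: complex \<Rightarrow> complex poly \<Rightarrow> complex poly"
  by unfold_locales (auto simp: smult_add_right smult_add_left)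

definition S :: "nat \<Rightarrow> complex poly set" where
  "S a = {p. degree p \<le> a}"

definition prodsp :: "complex poly set \<Rightarrow> complex poly set \<Rightarrow> complex poly set" where
  "prodsp V W = pvs.span {f * g | f g. f \<in> V \<and> g \<in> W}"

definition mu :: "complex poly set \<Rightarrow> complex poly set \<Rightarrow> real" where
  "mu V W = real (pvs.dim (prodsp V W)) / real (pvs.dim W)"

end

theory Submission
  imports Defs
begin


lemma col_ineq:
  fixes a d c q s p ts tp tau Cs Cp :: int
  assumes "d > 0" "0 \<le> c" "c < d" "q \<ge> 1" "a = q*d + c" "0 \<le> s" "s < d" "0 \<le> p"
    "s \<ge> c \<Longrightarrow> p = s - c" "s < c \<Longrightarrow> p = s + d - c"
    "Cs = (if s < c then q+1 else q)" "Cp = (if p < c then q+1 else q)"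
    "0 \<le> ts" "ts \<le> Cs" "0 \<le> tp" "tp \<le> Cp"
    "ts > 0 \<Longrightarrow> tau \<ge> ts + 1" "tau \<ge> tp"
  shows "a*tau - (a+d)*ts \<ge> (if ts = Cs then s-d+1 else 0) - (if tp = Cp then p-d+1 else 0)"
proof (cases "ts = 0")
  case True
  have "a \<ge> d" using assms(1,2,4,5) by (smt (verit) mult_le_cancel_right1)
  have "a*tau \<ge> a*tp" using assms(18) \<open>a \<ge> d\<close> assms(1) by (intro mult_left_mono) auto
  moreover have "tp = Cp \<Longrightarrow> a*tp \<ge> a" using assms(4,12) \<open>a \<ge> d\<close> assms(1)
    by (smt (verit) mult_le_cancel_left1)
  ultimately have "tp = Cp \<Longrightarrow> a*tau \<ge> d" using \<open>a \<ge> d\<close> by linarith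
  moreover have "Cs \<ge> 1" using assms(4,11) by auto
  moreover have "a*tp \<ge> 0" using \<open>a \<ge> d\<close> assms(1,15) by simp
  ultimately show ?thesis using True assms(6,8) \<open>a*tau \<ge> a*tp\<close> by auto
next
  case False
  have a0: "a \<ge> 0" using assms(1,2,4,5) by (smt (verit) mult_le_cancel_right1)
  have "a*tau \<ge> a*(ts+1)" using assms(17) False assms(13) a0 by (intro mult_left_mono) auto
  hence h1: "a*tau - (a+d)*ts \<ge> a - d*ts" by (simp add: algebra_simps)
  have h2: "d*ts \<le> d*Cs" using assms(1,14) by (intro mult_left_mono) auto
  have h3: "ts < Cs \<Longrightarrow> d*ts \<le> d*(Cs - 1)" using assms(1,14) by (intro mult_left_mono) auto
  have qd: "a = d*q + c" using assms(5) by (simp add: mult.commute)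
  have h4: "ts < Cs \<Longrightarrow> a*tau - (a+d)*ts \<ge> a - d*Cs + d" using h1 h3 by (simp add: algebra_simps)
  have h5: "a*tau - (a+d)*ts \<ge> a - d*Cs" using h1 h2 by linarith
  show ?thesis
  proof (cases "s < c")
    case True
    then have "Cs = q+1" "p = s + d - c" using assms by auto
    then have "d*Cs = d*q + d" by (simp add: algebra_simps)
    then show ?thesis using h4 h5 qd True \<open>p = s + d - c\<close> assms(14) assms(1,2,6,7,8) \<open>Cs = q+1\<close>
      by (cases "ts = Cs"; cases "tp = Cp") (simp_all; linarith)+
  next
    case F2: False
    then have "Cs = q" "p = s - c" using assms by auto
    then show ?thesis using h4 h5 qd F2 assms(14) assms(1,2,6,7,8)
      by (cases "ts = Cs"; cases "tp = Cp") (simp_all; linarith)+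
  qed
qed

lemma card_cols:
  fixes d :: nat and X :: "nat set"
  assumes "0 < d" "finite X"
  shows "card X = (\<Sum>s<d. card {x\<in>X. x mod d = s})"
proof -
  have "X = (\<Union>s\<in>{..<d}. {x\<in>X. x mod d = s})" using assms(1) by auto
  moreover have "card (\<Union>s\<in>{..<d}. {x\<in>X. x mod d = s}) = (\<Sum>s<d. card {x\<in>X. x mod d = s})"
    using assms(2) by (intro card_UN_disjoint) auto
  ultimately show ?thesis by simp
qed

lemma col_full:
  fixes a d s :: nat
  assumes "0 < d" "d \<le> a" "s < d"
  shows "card {x\<in>{..<a}. x mod d = s} = (if s < a mod d then a div d + 1 else a div d)"
proof -
  define q c where "q = a div d" and "c = a mod d"
  have a: "a = q*d + c" by (simp add: q_def c_def)
  have cd: "c < d" using assms(1) by (simp add: c_def)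
  define n where "n = (if s < c then q+1 else q)"
  have eq: "{x\<in>{..<a}. x mod d = s} = (\<lambda>i. s + i*d) ` {..<n}"
  proof (intro set_eqI iffI)
    fix x assume x: "x \<in> {x\<in>{..<a}. x mod d = s}"
    have xs: "x mod d = s" using x by simp
    have "x div d * d + x mod d = x" by (rule div_mult_mod_eq)
    then have xe: "x = s + (x div d)*d" using xs by linarith
    have "x div d < n"
    proof (cases "s < c")
      case True
      have x1: "(x div d)*d \<le> x" by simp
      have x2: "(q+1)*d = q*d + d" by simp
      have "x < a" using x by simp
      then have "(x div d)*d < (q+1)*d" using x1 x2 a cd by linarith
      then have "x div d < q+1" using mult_less_cancel2 by blast
      then show ?thesis using True n_def by simp
    next
      case False
      have "x < a" "x mod d = s" using x by simp_all
      then have "(x div d)*d < q*d" using xe a False by linarith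
      then have "x div d < q" using mult_less_cancel2 by blast
      then show ?thesis using False n_def by simp
    qed
    then show "x \<in> (\<lambda>i. s + i*d) ` {..<n}" using xe by auto
  next
    fix x assume "x \<in> (\<lambda>i. s + i*d) ` {..<n}"
    then obtain i where i: "i < n" "x = s + i*d" by auto
    have "x < a"
    proof (cases "s < c")
      case True
      then have "i \<le> q" using i n_def by simp
      then have "i*d \<le> q*d" by simp
      then show ?thesis using i True a by linarith
    next
      case False
      then have "i + 1 \<le> q" using i n_def by simp
      then have "(i+1)*d \<le> q*d" by (rule mult_le_mono1)
      moreover have "(i+1)*d = i*d + d" by simp
      ultimately show ?thesis using i False a assms(3) by linarith
    qed
    moreover have "x mod d = s" using i assms(3) by simp
    ultimately show "x \<in> {x\<in>{..<a}. x mod d = s}" by simp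
  qed
  have "inj_on (\<lambda>i. s + i*d) {..<n}" using assms(1) by (auto simp: inj_on_def)
  then have "card {x\<in>{..<a}. x mod d = s} = n" using eq by (simp add: card_image)
  then show ?thesis by (simp add: n_def q_def c_def)
qed

lemma comb:
  fixes a d :: nat and A :: "nat set"
  assumes "0 < d" "d \<le> a" "A \<subseteq> {..<a}"
  shows "(a+d) * card A \<le> a * card {x + y | x y. x \<in> A \<and> y \<in> {0, a mod d, d}}"
proof -
  define c q where "c = a mod d" and "q = a div d"
  define T where "T = {x + y | x y. x \<in> A \<and> y \<in> {0, a mod d, d}}"
  have cd: "c < d" using assms(1) by (simp add: c_def)
  have aq: "a = q*d + c" by (simp add: q_def c_def)
  have q1: "q \<ge> 1" using assms(1,2) div_greater_zero_iff[of a d] by (simp add: q_def)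
  have finA: "finite A" using assms(3) finite_subset by blast
  have finT: "finite T"
  proof -
    have "T \<subseteq> (\<lambda>(x,y). x + y) ` (A \<times> {0, a mod d, d})" unfolding T_def by auto
    then show ?thesis using finA finite_subset by blast
  qed
  define col where "col X s = {x\<in>X. x mod d = s}" for X :: "nat set" and s
  define t where "t s = card (col A s)" for s
  define tau where "tau s = card (col T s)" for s
  define C where "C s = card (col {..<a} s)" for s
  define p where "p s = (s + (d - c)) mod d" for s
  have Cv: "C s = (if s < c then q+1 else q)" if "s < d" for s
    using col_full[OF assms(1,2) that] by (simp add: C_def col_def c_def q_def)
  have tC: "t s \<le> C s" for s
    unfolding t_def C_def col_def using assms(3) by (intro card_mono) auto
  have pd: "p s < d" for s using assms(1) by (simp add: p_def)
  have pc: "(x + c) mod d = s" if "x mod d = p s" "s < d" for x s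
  proof -
    have "(x + c) mod d = (x mod d + c) mod d" by (simp add: mod_add_left_eq)
    also have "\<dots> = ((s + (d - c)) mod d + c) mod d" using that by (simp add: p_def)
    also have "\<dots> = (s + (d - c) + c) mod d" by (simp add: mod_add_left_eq)
    also have "\<dots> = (s + d) mod d" using cd by simp
    also have "\<dots> = s" using that by simp
    finally show ?thesis .
  qed
  have p1: "p s = s - c" if "s < d" "c \<le> s" for s
  proof -
    have "s + (d - c) = (s - c) + d" using that cd by simp
    then have "p s = ((s - c) + d) mod d" by (simp add: p_def)
    also have "\<dots> = (s - c) mod d" by (rule mod_add_self2)
    also have "\<dots> = s - c" using that by simp
    finally show ?thesis .
  qed
  have p2: "p s = s + d - c" if "s < d" "s < c" for s
    using that cd by (simp add: p_def)
  have bij: "bij_betw p {..<d} {..<d}"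
  proof (rule bij_betw_imageI)
    show "inj_on p {..<d}"
    proof (rule inj_onI)
      fix x y assume "x \<in> {..<d}" "y \<in> {..<d}" "p x = p y"
      then have xd: "x < d" "y < d" by auto
      have m1: "p x mod d = p x" "p y mod d = p y" using pd[of x] pd[of y] by simp_all
      have "(p x + c) mod d = x" by (rule pc[OF m1(1) xd(1)])
      then have "(p y + c) mod d = x" using \<open>p x = p y\<close> by simp
      moreover have "(p y + c) mod d = y" by (rule pc[OF m1(2) xd(2)])
      ultimately show "x = y" by simp
    qed
    show "p ` {..<d} = {..<d}"
    proof (intro set_eqI iffI)
      fix y assume "y \<in> p ` {..<d}" then show "y \<in> {..<d}" using pd by auto
    next
      fix y assume y: "y \<in> {..<d}"
      have "(y + c) mod d < d" using assms(1) by simp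
      moreover have "p ((y + c) mod d) = y"
      proof -
        have "p ((y + c) mod d) = ((y + c) mod d + (d - c)) mod d" by (simp add: p_def)
        also have "\<dots> = (y + c + (d - c)) mod d" by (simp add: mod_add_left_eq)
        also have "\<dots> = (y + d) mod d" using cd by simp
        also have "\<dots> = y" using y by simp
        finally show ?thesis .
      qed
      ultimately show "y \<in> p ` {..<d}" by force
    qed
  qed
  have tau1: "tau s \<ge> t s + 1" if "t s > 0" for s
  proof -
    have fin: "finite (col A s)" using finA by (simp add: col_def)
    have ne: "col A s \<noteq> {}" using that card_gt_0_iff by (auto simp: t_def)
    define m where "m = Max (col A s)"
    have m: "m \<in> col A s" using ne fin by (simp add: m_def)
    have "m + d \<notin> col A s" using Max_ge[OF fin] assms(1) m_def by fastforce
    moreover have "insert (m + d) (col A s) \<subseteq> col T s"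
    proof
      fix x assume "x \<in> insert (m + d) (col A s)"
      then show "x \<in> col T s"
      proof
        assume "x = m + d"
        then show ?thesis using m unfolding col_def T_def by auto
      next
        assume "x \<in> col A s"
        then show ?thesis unfolding col_def T_def by force
      qed
    qed
    moreover have "finite (col T s)" using finT by (simp add: col_def)
    ultimately have "card (insert (m + d) (col A s)) \<le> tau s"
      by (simp add: tau_def card_mono)
    then show ?thesis using fin \<open>m + d \<notin> col A s\<close> by (simp add: t_def)
  qed
  have tau2: "tau s \<ge> t (p s)" if "s < d" for s
  proof -
    have "(\<lambda>x. x + c) ` col A (p s) \<subseteq> col T s"
    proof
      fix y assume "y \<in> (\<lambda>x. x + c) ` col A (p s)"
      then obtain x where x: "x \<in> A" "x mod d = p s" "y = x + c" by (auto simp: col_def)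
      then have "y mod d = s" using pc that by simp
      moreover have "y \<in> T" using x unfolding T_def c_def by blast
      ultimately show "y \<in> col T s" by (simp add: col_def)
    qed
    moreover have "finite (col T s)" using finT by (simp add: col_def)
    ultimately have "card ((\<lambda>x. x + c) ` col A (p s)) \<le> tau s"
      by (simp add: tau_def card_mono)
    moreover have "card ((\<lambda>x. x + c) ` col A (p s)) = t (p s)"
      by (simp add: card_image t_def)
    ultimately show ?thesis by simp
  qed
  define G where "G s = (if t s = C s then int s - int d + 1 else 0)" for s
  have key: "int a * int (tau s) - int (a+d) * int (t s) \<ge> G s - G (p s)" if s: "s < d" for s
  proof -
    have "int a * int (tau s) - (int a + int d) * int (t s) \<ge>
      (if int (t s) = int (C s) then int s - int d + 1 else 0)
      - (if int (t (p s)) = int (C (p s)) then int (p s) - int d + 1 else 0)"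
    proof (rule col_ineq[where c = "int c" and q = "int q"])
      show "int d > 0" using assms(1) by simp
      show "0 \<le> int c" by simp
      show "int c < int d" using cd by simp
      show "int q \<ge> 1" using q1 by simp
      show "int a = int q * int d + int c" using aq by simp
      show "0 \<le> int s" by simp
      show "int s < int d" using s by simp
      show "0 \<le> int (p s)" by simp
      show "int c \<le> int s \<Longrightarrow> int (p s) = int s - int c" using p1 s by simp
      show "int s < int c \<Longrightarrow> int (p s) = int s + int d - int c" using p2 s cd by simp
      show "int (C s) = (if int s < int c then int q + 1 else int q)" using Cv s by simp
      show "int (C (p s)) = (if int (p s) < int c then int q + 1 else int q)" using Cv pd by simp
      show "0 \<le> int (t s)" by simp
      show "int (t s) \<le> int (C s)" using tC by simp
      show "0 \<le> int (t (p s))" by simp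
      show "int (t (p s)) \<le> int (C (p s))" using tC by simp
      show "int (t s) > 0 \<Longrightarrow> int (tau s) \<ge> int (t s) + 1" proof -
        assume "int (t s) > 0"
        then have "t s > 0" by simp
        then have "t s + 1 \<le> tau s" by (rule tau1)
        then show ?thesis by simp
      qed
      show "int (tau s) \<ge> int (t (p s))" using tau2 s by simp
    qed
    then show ?thesis by (simp add: G_def)
  qed
  define X where "X s = int a * int (tau s) - int (a+d) * int (t s)" for s
  have S1: "(\<Sum>s<d. G s - G (p s)) \<le> (\<Sum>s<d. X s)"
  proof (rule sum_mono)
    fix s assume "s \<in> {..<d}"
    then show "G s - G (p s) \<le> X s" using key[of s] unfolding X_def by simp
  qed
  have "(\<Sum>s<d. G (p s)) = (\<Sum>s<d. G s)"
    by (rule sum.reindex_bij_betw[OF bij])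
  then have S2: "(\<Sum>s<d. G s - G (p s)) = 0"
    by (simp only: sum_subtractf)
  have S3: "(\<Sum>s<d. X s) = int a * (\<Sum>s<d. int (tau s)) - int (a+d) * (\<Sum>s<d. int (t s))"
    unfolding X_def by (simp only: sum_subtractf sum_distrib_left)
  have S4: "(\<Sum>s<d. int (tau s)) = int (card T)"
    using card_cols[OF assms(1) finT] by (simp only: tau_def col_def of_nat_sum)
  have S5: "(\<Sum>s<d. int (t s)) = int (card A)"
    using card_cols[OF assms(1) finA] by (simp only: t_def col_def of_nat_sum)
  have "int (a+d) * int (card A) \<le> int a * int (card T)"
    using S1 S2 S3 unfolding S4 S5 by linarith
  then have "(a+d) * card A \<le> a * card T" by (simp only: of_nat_mult[symmetric] of_nat_le_iff)
  then show ?thesis unfolding T_def .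
qed



lemma subspace_S: "pvs.subspace (S n)"
  unfolding pvs.subspace_def S_def
  by (auto intro: degree_add_le order.trans[OF degree_smult_le])

definition Z :: "nat \<Rightarrow> complex poly set" where
  "Z m = {p. \<forall>i\<ge>m. coeff p i = 0}"

lemma subspace_Z: "pvs.subspace (Z m)"
  unfolding pvs.subspace_def Z_def by auto

lemma S_sub_span: "S n \<subseteq> pvs.span ((\<lambda>i. monom 1 i) ` {..n})"
proof
  fix p assume "p \<in> S n"
  then have "degree p \<le> n" by (simp add: S_def)
  then have "p = (\<Sum>i\<le>n. monom (coeff p i) i)" by (simp add: poly_as_sum_of_monoms')
  also have "\<dots> = (\<Sum>i\<le>n. smult (coeff p i) (monom 1 i))" by (simp add: smult_monom)
  also have "\<dots> \<in> pvs.span ((\<lambda>i. monom 1 i) ` {..n})"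
    by (intro pvs.span_sum pvs.span_scale pvs.span_base) auto
  finally show "p \<in> pvs.span ((\<lambda>i. monom 1 i) ` {..n})" .
qed

lemma card_le_dim:
  assumes "X \<subseteq> S n" "pvs.independent B" "B \<subseteq> X"
  shows "card B \<le> pvs.dim X"
proof -
  obtain B' where B': "B' \<subseteq> X" "pvs.independent B'" "X \<subseteq> pvs.span B'" "card B' = pvs.dim X"
    by (rule pvs.basis_exists)
  have "finite B'"
    using pvs.independent_span_bound[of "(\<lambda>i. monom 1 i) ` {..n}" B'] B' assms(1) S_sub_span[of n]
    by auto
  moreover have "B \<subseteq> pvs.span B'" using assms(3) B'(3) by auto
  ultimately have "card B \<le> card B'"
    using pvs.independent_span_bound[of B' B] assms(2) by auto
  then show ?thesis using B'(4) by simp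
qed

lemma indep_degrees:
  fixes F :: "complex poly set"
  assumes "finite F" "0 \<notin> F" "inj_on degree F"
  shows "pvs.independent F"
  using assms(1)
proof (induction rule: finite_remove_induct)
  case empty
  then show ?case by (simp add: pvs.independent_empty)
next
  case (remove A)
  define m where "m = Max (degree ` A)"
  have "m \<in> degree ` A" using remove(1,2) by (simp add: m_def)
  then obtain v0 where v0: "v0 \<in> A" "degree v0 = m" by auto
  have ind: "pvs.independent (A - {v0})" using remove(4)[OF v0(1)] .
  have lt: "degree v < m" if "v \<in> A - {v0}" for v
  proof -
    have "degree v \<le> m" using that remove(1) by (simp add: m_def)
    moreover have "degree v \<noteq> m"
      using that v0 assms(3) remove(3) by (metis DiffE inj_on_def insertI1 subsetD)
    ultimately show ?thesis by simp
  qed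
  have "A - {v0} \<subseteq> Z m"
  proof
    fix v assume "v \<in> A - {v0}"
    then have "degree v < m" by (rule lt)
    then show "v \<in> Z m" by (auto simp: Z_def intro!: coeff_eq_0)
  qed
  then have "pvs.span (A - {v0}) \<subseteq> Z m"
    by (rule pvs.span_minimal[OF _ subspace_Z])
  moreover have "v0 \<notin> Z m"
  proof -
    have "v0 \<noteq> 0" using v0(1) remove(3) assms(2) by auto
    then have "coeff v0 m \<noteq> 0" using v0(2) by (metis leading_coeff_0_iff)
    then show ?thesis by (auto simp: Z_def)
  qed
  ultimately have "v0 \<notin> pvs.span (A - {v0})" by auto
  then have "pvs.independent (insert v0 (A - {v0}))"
    by (rule pvs.independent_insertI[OF _ ind])
  moreover have "insert v0 (A - {v0}) = A" using v0(1) by auto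
  ultimately show ?case by simp
qed

definition degs :: "complex poly set \<Rightarrow> nat set" where
  "degs X = degree ` (X - {0})"

lemma degs_le_dim:
  assumes "X \<subseteq> S n"
  shows "card (degs X) \<le> pvs.dim X"
proof -
  define f where "f k = (SOME p. p \<in> X - {0} \<and> degree p = k)" for k
  have f: "f k \<in> X - {0} \<and> degree (f k) = k" if "k \<in> degs X" for k
    unfolding f_def by (rule someI_ex) (use that in \<open>auto simp: degs_def\<close>)
  have fin: "finite (degs X)"
  proof (rule finite_subset)
    show "degs X \<subseteq> {..n}" using assms by (auto simp: degs_def S_def)
  qed simp
  have inj: "inj_on f (degs X)" by (metis f inj_onI)
  have "pvs.independent (f ` degs X)"
  proof (rule indep_degrees)
    show "finite (f ` degs X)" using fin by simp
    show "0 \<notin> f ` degs X" using f by force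
    show "inj_on degree (f ` degs X)" using f by (auto simp: inj_on_def)
  qed
  moreover have "f ` degs X \<subseteq> X" using f by auto
  ultimately have "card (f ` degs X) \<le> pvs.dim X" by (rule card_le_dim[OF assms])
  then show ?thesis using card_image[OF inj] by simp
qed

lemma dim_le_degs:
  assumes "pvs.subspace X" "X \<subseteq> S n"
  shows "pvs.dim X \<le> card (degs X)"
proof -
  define f where "f k = (SOME p. p \<in> X - {0} \<and> degree p = k)" for k
  have f: "f k \<in> X - {0} \<and> degree (f k) = k" if "k \<in> degs X" for k
    unfolding f_def by (rule someI_ex) (use that in \<open>auto simp: degs_def\<close>)
  have fin: "finite (degs X)"
  proof (rule finite_subset)
    show "degs X \<subseteq> {..n}" using assms by (auto simp: degs_def S_def)
  qed simp
  have main: "\<forall>w. w \<in> X \<and> degree w = m \<longrightarrow> w \<in> pvs.span (f ` degs X)" for m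
  proof (induction m rule: less_induct)
    case (less m)
    show ?case
    proof (intro allI impI)
      fix w assume w: "w \<in> X \<and> degree w = m"
      show "w \<in> pvs.span (f ` degs X)"
      proof (cases "w = 0")
        case True then show ?thesis by (simp add: pvs.span_zero)
      next
        case False
        then have mX: "m \<in> degs X" using w by (auto simp: degs_def)
        define g where "g = f m"
        have g: "g \<in> X" "g \<noteq> 0" "degree g = m" using f[OF mX] by (auto simp: g_def)
        define w' where "w' = w - smult (lead_coeff w / lead_coeff g) g"
        have w'X: "w' \<in> X" unfolding w'_def
          using assms(1) w g(1) by (intro pvs.subspace_diff pvs.subspace_scale) auto
        have "coeff g m \<noteq> 0" using g by (metis leading_coeff_0_iff)
        then have cm: "coeff w' m = 0"
          using g w False by (simp add: w'_def)
        have dle: "degree w' \<le> m" unfolding w'_def using w g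
          by (intro degree_diff_le) (auto intro: order.trans[OF degree_smult_le])
        have "w' \<in> pvs.span (f ` degs X)"
        proof (cases "w' = 0")
          case True then show ?thesis by (simp add: pvs.span_zero)
        next
          case F: False
          have "degree w' \<noteq> m" using cm F by (metis leading_coeff_0_iff)
          then have "degree w' < m" using dle by simp
          then show ?thesis using less w'X by blast
        qed
        moreover have "g \<in> pvs.span (f ` degs X)"
          using mX by (auto simp: g_def intro: pvs.span_base)
        ultimately have "w' + smult (lead_coeff w / lead_coeff g) g \<in> pvs.span (f ` degs X)"
          by (intro pvs.span_add pvs.span_scale)
        then show ?thesis by (simp add: w'_def)
      qed
    qed
  qed
  have "X \<subseteq> pvs.span (f ` degs X)" using main by blast
  then have "pvs.dim X \<le> card (f ` degs X)" by (rule pvs.dim_le_card) (use fin in simp)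
  also have "\<dots> \<le> card (degs X)" using fin by (rule card_image_le)
  finally show ?thesis .
qed



theorem mainTheorem5:
  fixes a b c :: nat and V :: "complex poly set"
  assumes "0 < a" and "a < b" and "b \<le> 2 * a"
    and "c = a mod (b - a)"
    and "V = pvs.span {1, monom 1 c, monom 1 (b - a)}"
  shows "\<forall>W. pvs.subspace W \<and> W \<subseteq> S (a - 1) \<and> W \<noteq> {0}
           \<longrightarrow> mu V W \<ge> real b / real a"
proof (intro allI impI)
  fix W assume W: "pvs.subspace W \<and> W \<subseteq> S (a - 1) \<and> W \<noteq> {0}"
  define d where "d = b - a"
  have d0: "0 < d" "d \<le> a" "b = a + d" using assms(2,3) by (auto simp: d_def)
  have cd: "c < d" using d0(1) assms(4) by (simp add: d_def)
  define A where "A = degs W"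
  define T where "T = {x + y | x y. x \<in> A \<and> y \<in> {0, a mod d, d}}"
  have AW: "A \<subseteq> {..<a}" using W assms(1) by (auto simp: A_def degs_def S_def)
  have comb: "(a+d) * card A \<le> a * card T"
    unfolding T_def by (rule comb[OF d0(1,2) AW])
  have VS: "V \<subseteq> S d"
    unfolding assms(5) d_def[symmetric]
  proof (rule pvs.span_minimal[OF _ subspace_S])
    show "{1, monom 1 c, monom 1 d} \<subseteq> S d" using cd by (auto simp: S_def degree_monom_eq)
  qed
  define P where "P = prodsp V W"
  have PS: "P \<subseteq> S (d + (a - 1))"
    unfolding P_def prodsp_def
  proof (rule pvs.span_minimal[OF _ subspace_S])
    show "{f * g |f g. f \<in> V \<and> g \<in> W} \<subseteq> S (d + (a - 1))"
    proof
      fix h assume "h \<in> {f * g |f g. f \<in> V \<and> g \<in> W}"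
      then obtain f g where h: "h = f * g" "f \<in> V" "g \<in> W" by auto
      have "degree f \<le> d" "degree g \<le> a - 1" using h VS W by (auto simp: S_def)
      then have "degree (f * g) \<le> d + (a - 1)" using degree_mult_le[of f g] by linarith
      then have "degree h \<le> d + (a - 1)" using h(1) by simp
      then show "h \<in> S (d + (a - 1))" by (simp add: S_def)
    qed
  qed
  have TP: "T \<subseteq> degs P"
  proof
    fix z assume "z \<in> T"
    then obtain x y where z: "z = x + y" "x \<in> A" "y \<in> {0, c, d}"
      unfolding T_def assms(4) d_def by auto
    obtain g where g: "g \<in> W" "g \<noteq> 0" "degree g = x" using z(2) by (auto simp: A_def degs_def)
    have e: "monom 1 y \<in> V"
    proof -
      have "monom 1 y \<in> {1, monom 1 c, monom 1 d}" using z(3) by (auto simp: monom_0 one_pCons)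
      then show ?thesis unfolding assms(5) d_def[symmetric] by (rule pvs.span_base)
    qed
    have "monom 1 y * g \<in> P" unfolding P_def prodsp_def
      by (rule pvs.span_base) (use e g in blast)
    moreover have "monom 1 y * g \<noteq> 0" using g(2) by simp
    moreover have "degree (monom 1 y * g) = z"
      using g z by (simp add: degree_mult_eq degree_monom_eq)
    ultimately show "z \<in> degs P" unfolding degs_def by force
  qed
  have finP: "finite (degs P)"
  proof (rule finite_subset)
    show "degs P \<subseteq> {..d + (a - 1)}" using PS by (auto simp: degs_def S_def)
  qed simp
  have "card T \<le> card (degs P)" using TP finP by (rule card_mono[rotated])
  also have "\<dots> \<le> pvs.dim P" by (rule degs_le_dim[OF PS])
  finally have TdP: "card T \<le> pvs.dim P" .
  have dW: "pvs.dim W \<le> card A" unfolding A_def using W by (intro dim_le_degs) auto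
  have dW1: "pvs.dim W \<ge> 1"
  proof -
    obtain w where w: "w \<in> W" "w \<noteq> 0"
      using W pvs.subspace_0 by blast
    have "pvs.independent {w}" using w(2) by (intro indep_degrees) auto
    then have "card {w} \<le> pvs.dim W" using W w by (intro card_le_dim) auto
    then show ?thesis by simp
  qed
  have "b * pvs.dim W \<le> a * pvs.dim P"
  proof -
    have "b * pvs.dim W \<le> b * card A" using dW by simp
    also have "\<dots> \<le> a * card T" using comb d0(3) by simp
    also have "\<dots> \<le> a * pvs.dim P" using TdP by simp
    finally show ?thesis .
  qed
  then have "real b * real (pvs.dim W) \<le> real a * real (pvs.dim P)"
    by (metis of_nat_le_iff of_nat_mult)
  then show "mu V W \<ge> real b / real a"
    using dW1 assms(1) unfolding mu_def P_def[symmetric]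
    by (simp add: divide_simps mult.commute)
qed

end
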